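(* Let $\mathbb{K}\in\{\mathbb{R},\mathbb{C}\}$ and $\mathcal{A}=(A_1,\ldots,A_d)$ positive semidefinite matrices in $\mathbb{K}^{n\times n}$. For all positive integers $k,m$ with $mk\le d$, $$\mathrm{SRel}_{mk}(\mathcal{A})\le\mathrm{SRel}_k(\mathcal{A}).$$
   Context: $\langle x,y\rangle=x^\dagger y$ with $\dagger$ the (conjugate) transpose, $\|x\|^2=\langle x,x\rangle$. A real polynomial $f$ is written $f\succeq0$ if it is a sum of squares of real polynomials; when $\mathbb{K}=\mathbb{C}$, polynomials in $x$ are regarded as real polynomials in the $2n$ real variables $\operatorname{Re}x,\operatorname{Im}x$. Let $\mathcal{S}_k$ be the set of $k$-element subsets of $\{1,\ldots,d\}$, and for $t\in\mathbb{R}^d$, $E_k(t)=\binom dk^{-1}\sum_{I\in\mathcal{S}_k}\prod_{i\in I}t_i$. Define $\mathrm{SRel}_k(\mathcal{A})=\inf\{\lambda^{1/k}:\ \lambda\ge0,\ \lambda\|x\|^{2k}-E_k(\langle x,A_1x\rangle,\ldots,\langle x,A_dx\rangle)\succeq0\}$. *)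

theory Defs
  imports "HOL-Analysis.Analysis"
begin

text \<open>Real polynomial functions in the real variables indexed by type 'v
  (over an infinite field, polynomial functions and polynomials correspond).\<close>
inductive poly_fun :: "(('v \<Rightarrow> real) \<Rightarrow> real) \<Rightarrow> bool" where
  pf_const: "poly_fun (\<lambda>x. c)"
| pf_var: "poly_fun (\<lambda>x. x v)"
| pf_add: "poly_fun p \<Longrightarrow> poly_fun q \<Longrightarrow> poly_fun (\<lambda>x. p x + q x)"
| pf_mult: "poly_fun p \<Longrightarrow> poly_fun q \<Longrightarrow> poly_fun (\<lambda>x. p x * q x)"

definition sos :: "(('v \<Rightarrow> real) \<Rightarrow> real) \<Rightarrow> bool" where
  "sos f \<longleftrightarrow> (\<exists>gs. (\<forall>g\<in>set gs. poly_fun g) \<and>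
                 f = (\<lambda>x. \<Sum>g\<leftarrow>gs. (g x)^2))"

definition Esym :: "nat \<Rightarrow> nat \<Rightarrow> (nat \<Rightarrow> real) \<Rightarrow> real" where
  "Esym d k t = (\<Sum>I\<in>{I. I \<subseteq> {1..d} \<and> card I = k}. \<Prod>i\<in>I. t i) / real (d choose k)"

text \<open>Generic SRel_k, given the squared norm polynomial and the quadratic forms
  q i = <x, A_i x> as real polynomial functions.\<close>
definition SRel_gen :: "nat \<Rightarrow> nat \<Rightarrow> (('v \<Rightarrow> real) \<Rightarrow> real)
     \<Rightarrow> (nat \<Rightarrow> ('v \<Rightarrow> real) \<Rightarrow> real) \<Rightarrow> real" where
  "SRel_gen d k nsq q = Inf {root k lam | lam. lam \<ge> 0 \<and>
      sos (\<lambda>x. lam * (nsq x)^k - Esym d k (\<lambda>i. q i x))}"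

definition psd_real :: "real^'n^'n \<Rightarrow> bool" where
  "psd_real A \<longleftrightarrow> transpose A = A \<and> (\<forall>x. 0 \<le> x \<bullet> (A *v x))"

definition SRel_real :: "nat \<Rightarrow> nat \<Rightarrow> (nat \<Rightarrow> real^'n^'n) \<Rightarrow> real" where
  "SRel_real d k A = SRel_gen d k
     (\<lambda>x::'n \<Rightarrow> real. \<Sum>i\<in>UNIV. (x i)^2)
     (\<lambda>l x. \<Sum>i\<in>UNIV. \<Sum>j\<in>UNIV. x i * (A l $ i $ j) * x j)"

text \<open>Complex case: K = C, x \<in> C^n viewed through the 2n real variables
  Re x_i = v (i,True), Im x_i = v (i,False).\<close>
definition hermitian :: "complex^'n^'n \<Rightarrow> bool" where
  "hermitian A \<longleftrightarrow> (\<forall>i j. A $ i $ j = cnj (A $ j $ i))"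

definition cquad :: "complex^'n^'n \<Rightarrow> ('n \<Rightarrow> complex) \<Rightarrow> complex" where
  "cquad A x = (\<Sum>i\<in>UNIV. \<Sum>j\<in>UNIV. cnj (x i) * (A $ i $ j) * x j)"

definition psd_complex :: "complex^'n^'n \<Rightarrow> bool" where
  "psd_complex A \<longleftrightarrow> hermitian A \<and> (\<forall>x. 0 \<le> Re (cquad A x))"

definition cvec :: "('n \<times> bool \<Rightarrow> real) \<Rightarrow> 'n \<Rightarrow> complex" where
  "cvec v i = Complex (v (i, True)) (v (i, False))"

definition SRel_complex :: "nat \<Rightarrow> nat \<Rightarrow> (nat \<Rightarrow> complex^'n^'n) \<Rightarrow> real" where
  "SRel_complex d k A = SRel_gen d k
     (\<lambda>v::'n \<times> bool \<Rightarrow> real. \<Sum>i\<in>UNIV. (cmod (cvec v i))^2)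
     (\<lambda>l v. Re (cquad (A l) (cvec v)))"

end

theory Submission
  imports Defs "HOL-Combinatorics.Permutations"
begin

lemma pf_sub: "poly_fun p \<Longrightarrow> poly_fun q \<Longrightarrow> poly_fun (\<lambda>x. p x - q x)"
proof -
  assume p: "poly_fun p" and q: "poly_fun q"
  have "poly_fun (\<lambda>x. (-1) * q x)" by (rule pf_mult[OF pf_const q])
  from pf_add[OF p this] show ?thesis by simp
qed

lemma pf_scale: "poly_fun p \<Longrightarrow> poly_fun (\<lambda>x. c * p x)"
  by (rule pf_mult[OF pf_const])

lemma pf_sum: "(\<And>i. i \<in> S \<Longrightarrow> poly_fun (f i)) \<Longrightarrow> poly_fun (\<lambda>x. \<Sum>i\<in>S. f i x)"
proof (induction S rule: infinite_finite_induct)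
  case (infinite A) then show ?case by (simp add: pf_const)
next
  case empty then show ?case by (simp add: pf_const)
next
  case (insert a A) then show ?case by (simp add: pf_add)
qed

lemma pf_prod: "(\<And>i. i \<in> S \<Longrightarrow> poly_fun (f i)) \<Longrightarrow> poly_fun (\<lambda>x. \<Prod>i\<in>S. f i x)"
proof (induction S rule: infinite_finite_induct)
  case (infinite A) then show ?case by (simp add: pf_const)
next
  case empty then show ?case by (simp add: pf_const)
next
  case (insert a A) then show ?case by (simp add: pf_mult)
qed

lemma pf_power: "poly_fun p \<Longrightarrow> poly_fun (\<lambda>x. p x ^ n)"
  by (induction n) (simp_all add: pf_const pf_mult)

lemma sos_0: "sos (\<lambda>x. 0)"
  unfolding sos_def by (rule exI[of _ "[]"]) simp

lemma sos_sq: "poly_fun g \<Longrightarrow> sos (\<lambda>x. (g x)^2)"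
  unfolding sos_def by (rule exI[of _ "[g]"]) simp

lemma sos_cong: "sos f \<Longrightarrow> (\<And>x. f x = g x) \<Longrightarrow> sos g"
proof -
  assume "sos f" "\<And>x. f x = g x"
  then have "f = g" by auto
  with \<open>sos f\<close> show ?thesis by simp
qed

lemma sos_nonneg: "sos f \<Longrightarrow> 0 \<le> f x"
  unfolding sos_def by (auto intro!: sum_list_nonneg)

lemma sos_add: "sos f \<Longrightarrow> sos g \<Longrightarrow> sos (\<lambda>x. f x + g x)"
  unfolding sos_def
proof (elim exE conjE)
  fix gs hs assume "\<forall>g\<in>set gs. poly_fun g" "f = (\<lambda>x. \<Sum>g\<leftarrow>gs. (g x)\<^sup>2)"
     "\<forall>g\<in>set hs. poly_fun g" "g = (\<lambda>x. \<Sum>g\<leftarrow>hs. (g x)\<^sup>2)"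
  then show "\<exists>ks. (\<forall>g\<in>set ks. poly_fun g) \<and> (\<lambda>x. f x + g x) = (\<lambda>x. \<Sum>g\<leftarrow>ks. (g x)\<^sup>2)"
    by (intro exI[of _ "gs @ hs"]) auto
qed

lemma sum_list_prod_sq:
  fixes gs hs :: "('a \<Rightarrow> real) list"
  shows "(\<Sum>g\<leftarrow>gs. (g x)\<^sup>2) * (\<Sum>h\<leftarrow>hs. (h x)\<^sup>2) =
   (\<Sum>k\<leftarrow>concat (map (\<lambda>g. map (\<lambda>h. \<lambda>x. g x * h x) hs) gs). (k x)\<^sup>2)"
proof (induction gs)
  case Nil then show ?case by simp
next
  case (Cons a gs)
  have "(\<Sum>h\<leftarrow>hs. (a x * h x)\<^sup>2) = (a x)^2 * (\<Sum>h\<leftarrow>hs. (h x)\<^sup>2)"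
    by (simp add: power_mult_distrib sum_list_const_mult)
  with Cons show ?case by (simp add: distrib_right o_def)
qed

lemma sos_mult: "sos f \<Longrightarrow> sos g \<Longrightarrow> sos (\<lambda>x. f x * g x)"
  unfolding sos_def
proof (elim exE conjE)
  fix gs hs assume a: "\<forall>g\<in>set gs. poly_fun g" "f = (\<lambda>x. \<Sum>g\<leftarrow>gs. (g x)\<^sup>2)"
     "\<forall>g\<in>set hs. poly_fun g" "g = (\<lambda>x. \<Sum>g\<leftarrow>hs. (g x)\<^sup>2)"
  show "\<exists>ks. (\<forall>g\<in>set ks. poly_fun g) \<and> (\<lambda>x. f x * g x) = (\<lambda>x. \<Sum>g\<leftarrow>ks. (g x)\<^sup>2)"
    apply (intro exI[of _ "concat (map (\<lambda>g. map (\<lambda>h. \<lambda>x. g x * h x) hs) gs)"])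
    using a by (auto simp: sum_list_prod_sq intro: pf_mult)
qed

lemma sos_scale: "0 \<le> c \<Longrightarrow> sos f \<Longrightarrow> sos (\<lambda>x. c * f x)"
  unfolding sos_def
proof (elim exE conjE)
  fix gs assume c: "0 \<le> c" and a: "\<forall>g\<in>set gs. poly_fun g" "f = (\<lambda>x. \<Sum>g\<leftarrow>gs. (g x)\<^sup>2)"
  have "(\<Sum>g\<leftarrow>gs. (sqrt c * g x)\<^sup>2) = c * (\<Sum>g\<leftarrow>gs. (g x)\<^sup>2)" for x
    using c by (induction gs) (simp_all add: power_mult_distrib distrib_left)
  then show "\<exists>ks. (\<forall>g\<in>set ks. poly_fun g) \<and> (\<lambda>x. c * f x) = (\<lambda>x. \<Sum>g\<leftarrow>ks. (g x)\<^sup>2)"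
    apply (intro exI[of _ "map (\<lambda>g x. sqrt c * g x) gs"])
    using a by (auto simp: o_def intro: pf_scale)
qed

lemma sos_sum: "(\<And>i. i \<in> S \<Longrightarrow> sos (f i)) \<Longrightarrow> sos (\<lambda>x. \<Sum>i\<in>S. f i x)"
proof (induction S rule: infinite_finite_induct)
  case (infinite A) then show ?case by (simp add: sos_0)
next
  case empty then show ?case by (simp add: sos_0)
next
  case (insert a A) then show ?case by (simp add: sos_add)
qed

lemma sos_1: "sos (\<lambda>x. 1)"
  using sos_sq[OF pf_const[of 1]] by simp

lemma sos_prod: "(\<And>i. i \<in> S \<Longrightarrow> sos (f i)) \<Longrightarrow> sos (\<lambda>x. \<Prod>i\<in>S. f i x)"
proof (induction S rule: infinite_finite_induct)
  case (infinite A) then show ?case by (simp add: sos_1)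
next
  case empty then show ?case by (simp add: sos_1)
next
  case (insert a A) then show ?case by (simp add: sos_mult)
qed

lemma sos_power: "sos f \<Longrightarrow> sos (\<lambda>x. f x ^ n)"
  by (induction n) (simp_all add: sos_1 sos_mult)


definition Q :: "('v::finite \<Rightarrow> 'v \<Rightarrow> real) \<Rightarrow> ('v \<Rightarrow> real) \<Rightarrow> real" where
  "Q M x = (\<Sum>i\<in>UNIV. \<Sum>j\<in>UNIV. x i * M i j * x j)"

definition lin :: "('v::finite \<Rightarrow> real) \<Rightarrow> ('v \<Rightarrow> real) \<Rightarrow> real" where
  "lin a x = (\<Sum>i\<in>UNIV. a i * x i)"

lemma Q_unit: "Q M (\<lambda>i. if i = p then 1 else 0) = M p p"
proof -
  have "\<And>i. (\<Sum>j\<in>UNIV. (if i = p then 1 else 0) * M i j * (if j = p then 1 else 0))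
     = (\<Sum>j\<in>UNIV. if j = p then (if i = p then M p p else 0) else 0)"
    by (rule sum.cong) auto
  then have "Q M (\<lambda>i. if i = p then 1 else 0) = (\<Sum>i\<in>UNIV. if i = p then M p p else 0)"
    unfolding Q_def by (simp cong: if_cong)
  then show ?thesis by simp
qed

lemma Q_two:
  assumes "p \<noteq> j"
  shows "Q M (\<lambda>i. if i = p then s else if i = j then 1 else 0) = s * s * M p p + s * M p j + s * M j p + M j j"
proof -
  let ?x = "(\<lambda>i. if i = p then s else if i = j then 1 else 0)"
  have "Q M ?x = (\<Sum>i\<in>UNIV. ?x i * (\<Sum>k\<in>UNIV. M i k * ?x k))"
    unfolding Q_def by (simp add: sum_distrib_left mult.assoc)
  also have "\<And>i. (\<Sum>k\<in>UNIV. M i k * ?x k) = s * M i p + M i j"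
  proof -
    fix i
    have "(\<Sum>k\<in>UNIV. M i k * ?x k) = (\<Sum>k\<in>UNIV. (if k = p then s * M i p else 0) + (if k = j then M i j else 0))"
      by (rule sum.cong) (use assms in auto)
    also have "\<dots> = s * M i p + M i j" by (simp add: sum.distrib)
    finally show "(\<Sum>k\<in>UNIV. M i k * ?x k) = s * M i p + M i j" .
  qed
  then have "(\<Sum>i\<in>UNIV. ?x i * (\<Sum>k\<in>UNIV. M i k * ?x k)) = (\<Sum>i\<in>UNIV. ?x i * (s * M i p + M i j))"
    by simp
  also have "\<dots> = (\<Sum>i\<in>UNIV. (if i = p then s * (s * M p p + M p j) else 0) + (if i = j then (s * M j p + M j j) else 0))"
    by (rule sum.cong) (use assms in auto)
  also have "\<dots> = s * s * M p p + s * M p j + s * M j p + M j j"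
    by (simp add: sum.distrib algebra_simps)
  finally show ?thesis .
qed

lemma psd_decomp_aux:
  fixes S :: "'v::finite set"
  shows "finite S \<Longrightarrow> \<forall>M. (\<forall>i j. M i j = M j i) \<longrightarrow> (\<forall>i j. i \<notin> S \<longrightarrow> M i j = 0) \<longrightarrow>
     (\<forall>x. 0 \<le> Q M x) \<longrightarrow> (\<exists>ls. \<forall>x. Q M x = (\<Sum>a\<leftarrow>ls. (lin a x)^2))"
proof (induction S rule: finite_induct)
  case empty
  show ?case
  proof (intro allI impI)
    fix M :: "'v \<Rightarrow> 'v \<Rightarrow> real" assume "\<forall>i j. i \<notin> {} \<longrightarrow> M i j = 0"
    then have "\<forall>x. Q M x = 0" by (simp add: Q_def)
    then show "\<exists>ls. \<forall>x. Q M x = (\<Sum>a\<leftarrow>ls. (lin a x)^2)" by (intro exI[of _ "[]"]) simp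
  qed
next
  case (insert p S)
  show ?case
  proof (intro allI impI)
    fix M :: "'v \<Rightarrow> 'v \<Rightarrow> real"
    assume sym: "\<forall>i j. M i j = M j i" and van: "\<forall>i j. i \<notin> insert p S \<longrightarrow> M i j = 0"
      and psd: "\<forall>x. 0 \<le> Q M x"
    have cge: "0 \<le> M p p" using psd Q_unit[of M p] by metis
    show "\<exists>ls. \<forall>x. Q M x = (\<Sum>a\<leftarrow>ls. (lin a x)^2)"
    proof (cases "M p p = 0")
      case True
      have row: "M p j = 0" for j
      proof (rule ccontr)
        assume ne: "M p j \<noteq> 0"
        then have pj: "p \<noteq> j" using True by auto
        define s where "s = - (M j j + 1) / (2 * M p j)"
        have "Q M (\<lambda>i. if i = p then s else if i = j then 1 else 0) = 2 * s * M p j + M j j"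
          using Q_two[OF pj, of M s] True sym by (simp add: algebra_simps)
        also have "\<dots> = -1" using ne by (simp add: s_def field_simps)
        finally show False using psd by (metis neg_0_le_iff_le not_one_le_zero)
      qed
      have "\<forall>i j. i \<notin> S \<longrightarrow> M i j = 0"
        using van row by (metis insert_iff)
      with insert.IH sym psd show ?thesis by blast
    next
      case False
      define c where "c = M p p"
      have cpos: "0 < c" using False cge c_def by auto
      define M' where "M' i j = M i j - M i p * M p j / c" for i j
      define a0 where "a0 i = M p i / sqrt c" for i
      have split: "Q M x = (lin a0 x)^2 + Q M' x" for x
      proof -
        let ?L = "\<Sum>i\<in>UNIV. M p i * x i"
        have "Q M' x = Q M x - (\<Sum>i\<in>UNIV. \<Sum>j\<in>UNIV. (x i * M i p) * (M p j * x j) / c)"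
          unfolding Q_def M'_def by (simp add: sum_subtractf algebra_simps)
        also have "(\<Sum>i\<in>UNIV. \<Sum>j\<in>UNIV. (x i * M i p) * (M p j * x j) / c) = (\<Sum>i\<in>UNIV. x i * M i p) * ?L / c"
          by (simp add: sum_product sum_divide_distrib)
        also have "(\<Sum>i\<in>UNIV. x i * M i p) = ?L" using sym by (simp add: mult.commute)
        also have "?L * ?L / c = (lin a0 x)^2"
        proof -
          have "lin a0 x = ?L / sqrt c" unfolding lin_def a0_def by (simp add: sum_divide_distrib)
          then show ?thesis using cpos by (simp add: power2_eq_square)
        qed
        finally show ?thesis by simp
      qed
      have M'p1: "M' p j = 0" for j unfolding M'_def c_def using cpos c_def by simp
      have M'p2: "M' i p = 0" for i unfolding M'_def c_def using cpos c_def by simp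
      have symM': "\<forall>i j. M' i j = M' j i" unfolding M'_def using sym by (simp add: mult.commute)
      have vanM': "\<forall>i j. i \<notin> S \<longrightarrow> M' i j = 0"
      proof (intro allI impI)
        fix i j assume "i \<notin> S"
        then show "M' i j = 0"
        proof (cases "i = p")
          case True then show ?thesis using M'p1 by simp
        next
          case False then show ?thesis using van \<open>i \<notin> S\<close> by (simp add: M'_def)
        qed
      qed
      have psdM': "\<forall>x. 0 \<le> Q M' x"
      proof
        fix x :: "'v \<Rightarrow> real"
        define L where "L = (\<Sum>i\<in>UNIV. M p i * x i)"
        define y where "y = x(p := x p - L / c)"
        have "Q M' y = Q M' x" unfolding Q_def
          by (rule sum.cong[OF refl], rule sum.cong[OF refl]) (auto simp: y_def M'p1 M'p2)
        moreover have "lin a0 y = 0"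
        proof -
          have "(\<Sum>i\<in>UNIV. M p i * y i) = (\<Sum>i\<in>UNIV. M p i * x i + (if i = p then - M p p * L / c else 0))"
            by (rule sum.cong) (auto simp: y_def algebra_simps)
          also have "\<dots> = 0" using cpos by (simp add: sum.distrib L_def c_def)
          finally show ?thesis unfolding lin_def a0_def by (simp add: sum_divide_distrib[symmetric])
        qed
        ultimately have "Q M y = Q M' x" using split[of y] by simp
        then show "0 \<le> Q M' x" using psd by metis
      qed
      obtain ls where ls: "\<forall>x. Q M' x = (\<Sum>a\<leftarrow>ls. (lin a x)^2)"
        using insert.IH symM' vanM' psdM' by blast
      show ?thesis using split ls by (intro exI[of _ "a0 # ls"]) simp
    qed
  qed
qed

lemma psd_decomp:
  fixes M :: "'v::finite \<Rightarrow> 'v \<Rightarrow> real"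
  assumes "\<forall>x. 0 \<le> Q M x"
  shows "\<exists>ls. \<forall>x. Q M x = (\<Sum>a\<leftarrow>ls. (lin a x)^2)"
proof -
  define M' where "M' i j = (M i j + M j i) / 2" for i j
  have eq: "Q M' x = Q M x" for x
  proof -
    have "Q M' x = (\<Sum>i\<in>UNIV. \<Sum>j\<in>UNIV. (x i * M i j * x j + x i * M j i * x j) / 2)"
      unfolding Q_def M'_def by (intro sum.cong refl) (simp add: algebra_simps)
    also have "\<dots> = ((\<Sum>i\<in>UNIV. \<Sum>j\<in>UNIV. x i * M i j * x j) + (\<Sum>i\<in>UNIV. \<Sum>j\<in>UNIV. x i * M j i * x j)) / 2"
      by (simp add: sum.distrib flip: sum_divide_distrib)
    also have "(\<Sum>i\<in>UNIV. \<Sum>j\<in>UNIV. x i * M j i * x j) = (\<Sum>i\<in>UNIV. \<Sum>j\<in>UNIV. x i * M i j * x j)"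
      by (subst sum.swap) (simp add: mult.commute mult.left_commute)
    finally show ?thesis unfolding Q_def by simp
  qed
  have s: "\<forall>i j. M' i j = M' j i" unfolding M'_def by (simp add: add.commute)
  have p: "\<forall>x. 0 \<le> Q M' x" using assms eq by simp
  have "\<exists>ls. \<forall>x. Q M' x = (\<Sum>a\<leftarrow>ls. (lin a x)^2)"
    using psd_decomp_aux[of "UNIV :: 'v set"] s p by auto
  then show ?thesis using eq by simp
qed

lemma pf_lin: "poly_fun (lin a)"
  unfolding lin_def by (rule pf_sum) (rule pf_mult[OF pf_const pf_var])

lemma sos_Q:
  assumes "\<forall>x. 0 \<le> Q M x"
  shows "sos (Q M)"
proof -
  obtain ls where ls: "\<forall>x. Q M x = (\<Sum>a\<leftarrow>ls. (lin a x)^2)" using psd_decomp[OF assms] by blast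
  show ?thesis unfolding sos_def using ls
    by (intro exI[of _ "map lin ls"]) (auto simp: o_def pf_lin)
qed

lemma lagrange:
  fixes a x :: "'v::finite \<Rightarrow> real"
  shows "(\<Sum>i\<in>UNIV. (a i)^2) * (\<Sum>j\<in>UNIV. (x j)^2) - (lin a x)^2
       = (1/2) * (\<Sum>i\<in>UNIV. \<Sum>j\<in>UNIV. (a i * x j - a j * x i)^2)"
proof -
  have "(\<Sum>i\<in>UNIV. \<Sum>j\<in>UNIV. (a i * x j - a j * x i)^2)
      = (\<Sum>i\<in>UNIV. \<Sum>j\<in>UNIV. (a i)^2 * (x j)^2) + (\<Sum>i\<in>UNIV. \<Sum>j\<in>UNIV. (a j)^2 * (x i)^2)
        - 2 * (\<Sum>i\<in>UNIV. \<Sum>j\<in>UNIV. (a i * x i) * (a j * x j))"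
    by (simp add: power2_diff sum.distrib sum_subtractf sum_distrib_left algebra_simps power_mult_distrib)
  also have "(\<Sum>i\<in>UNIV. \<Sum>j\<in>UNIV. (a j)^2 * (x i)^2) = (\<Sum>i\<in>UNIV. \<Sum>j\<in>UNIV. (a i)^2 * (x j)^2)"
    by (rule sum.swap)
  also have "(\<Sum>i\<in>UNIV. \<Sum>j\<in>UNIV. (a i)^2 * (x j)^2) = (\<Sum>i\<in>UNIV. (a i)^2) * (\<Sum>j\<in>UNIV. (x j)^2)"
    by (simp add: sum_product)
  also have "(\<Sum>i\<in>UNIV. \<Sum>j\<in>UNIV. (a i * x i) * (a j * x j)) = (lin a x)^2"
    by (simp add: lin_def power2_eq_square sum_product)
  finally show ?thesis by linarith
qed

lemma sos_lin_bound:
  fixes a :: "'v::finite \<Rightarrow> real"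
  shows "sos (\<lambda>x. (\<Sum>i\<in>UNIV. (a i)^2) * (\<Sum>j\<in>UNIV. (x j)^2) - (lin a x)^2)"
proof -
  have "sos (\<lambda>x. (\<Sum>i\<in>UNIV. \<Sum>j\<in>UNIV. (a i * x j - a j * x i)^2))"
    by (intro sos_sum sos_sq pf_sub pf_mult pf_const pf_var)
  from sos_scale[OF _ this, of "1/2"] have "sos (\<lambda>x. 1/2 * (\<Sum>i\<in>UNIV. \<Sum>j\<in>UNIV. (a i * x j - a j * x i)^2))" by simp
  then show ?thesis
    by (rule sos_cong) (rule lagrange[symmetric])
qed

lemma Q_bound:
  assumes "\<forall>x. 0 \<le> Q M x"
  shows "\<exists>c\<ge>0. sos (\<lambda>x. c * (\<Sum>j\<in>UNIV. (x j)^2) - Q M x)"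
proof -
  obtain ls where ls: "\<forall>x. Q M x = (\<Sum>a\<leftarrow>ls. (lin a x)^2)" using psd_decomp[OF assms] by blast
  define c where "c = (\<Sum>a\<leftarrow>ls. \<Sum>i\<in>UNIV. (a i)^2)"
  have "c \<ge> 0" unfolding c_def by (auto intro!: sum_list_nonneg sum_nonneg)
  have "sos (\<lambda>x. \<Sum>a\<leftarrow>ls. ((\<Sum>i\<in>UNIV. (a i)^2) * (\<Sum>j\<in>UNIV. (x j)^2) - (lin a x)^2))"
  proof (induction ls)
    case Nil then show ?case by (simp add: sos_0)
  next
    case (Cons a ls) then show ?case by (simp add: sos_add sos_lin_bound)
  qed
  moreover have "(\<Sum>a\<leftarrow>ls. ((\<Sum>i\<in>UNIV. (a i)^2) * (\<Sum>j\<in>UNIV. (x j)^2) - (lin a x)^2))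
     = c * (\<Sum>j\<in>UNIV. (x j)^2) - Q M x" for x
    unfolding c_def using ls by (simp add: sum_list_subtractf sum_list_mult_const)
  ultimately show ?thesis using \<open>c \<ge> 0\<close> by (auto intro: sos_cong)
qed


lemma ex_perm_image:
  fixes D A B :: "'a set"
  assumes "finite D" "A \<subseteq> D" "B \<subseteq> D" "card A = card B"
  shows "\<exists>\<rho>. \<rho> permutes D \<and> \<rho> ` A = B"
proof -
  have fA: "finite A" "finite B" using assms finite_subset by auto
  obtain f where f: "bij_betw f A B" using finite_same_card_bij[OF fA assms(4)] by blast
  have "card (D - A) = card (D - B)"
    using assms fA by (simp add: card_Diff_subset)
  then obtain g where g: "bij_betw g (D - A) (D - B)"
    using finite_same_card_bij[of "D - A" "D - B"] assms by auto
  define \<rho> where "\<rho> x = (if x \<in> A then f x else if x \<in> D then g x else x)" for x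
  have 1: "bij_betw \<rho> A B" using f by (rule bij_betw_cong[THEN iffD1, rotated]) (simp add: \<rho>_def)
  have 2: "bij_betw \<rho> (D - A) (D - B)" using g by (rule bij_betw_cong[THEN iffD1, rotated]) (simp add: \<rho>_def)
  have "bij_betw \<rho> (A \<union> (D - A)) (B \<union> (D - B))" by (rule bij_betw_combine[OF 1 2]) auto
  moreover have "A \<union> (D - A) = D" "B \<union> (D - B) = D" using assms by auto
  ultimately have "bij_betw \<rho> D D" by simp
  then have "\<rho> permutes D" by (rule bij_imp_permutes) (use assms in \<open>auto simp: \<rho>_def\<close>)
  moreover have "\<rho> ` A = B" using 1 by (simp add: bij_betw_def)
  ultimately show ?thesis by blast
qed

definition G :: "nat \<Rightarrow> (nat \<Rightarrow> ('v \<Rightarrow> real) \<Rightarrow> real) \<Rightarrow> (nat \<Rightarrow> nat) \<Rightarrow> ('v \<Rightarrow> real) \<Rightarrow> real" where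
  "G d t \<beta> x = (\<Sum>\<pi>\<in>{\<pi>. \<pi> permutes {1..d}}. \<Prod>p\<in>{1..d}. t (\<pi> p) x ^ \<beta> p)"

lemma G_perm:
  assumes "\<rho> permutes {1..d}"
  shows "G d t (\<beta> \<circ> \<rho>) x = G d t \<beta> x"
proof -
  let ?g = "\<lambda>\<pi>. \<Prod>p\<in>{1..d}. t (\<pi> p) x ^ \<beta> p"
  have ir: "inv \<rho> permutes {1..d}" using assms by (rule permutes_inv)
  have "G d t \<beta> x = (\<Sum>\<pi>\<in>{\<pi>. \<pi> permutes {1..d}}. ?g (\<pi> \<circ> inv \<rho>))"
    unfolding G_def by (rule sum_permutations_compose_right[OF ir])
  also have "\<dots> = G d t (\<beta> \<circ> \<rho>) x"
    unfolding G_def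
  proof (rule sum.cong[OF refl])
    fix \<pi>
    have "?g (\<pi> \<circ> inv \<rho>) = (\<Prod>p\<in>{1..d}. (\<lambda>p. t ((\<pi> \<circ> inv \<rho>) p) x ^ \<beta> p) (\<rho> p))"
      using prod.permute[OF assms, of "\<lambda>p. t ((\<pi> \<circ> inv \<rho>) p) x ^ \<beta> p"] by (simp add: o_def)
    also have "\<dots> = (\<Prod>p\<in>{1..d}. t (\<pi> p) x ^ (\<beta> \<circ> \<rho>) p)"
      using permutes_inverses(2)[OF assms] by simp
    finally show "?g (\<pi> \<circ> inv \<rho>) = (\<Prod>p\<in>{1..d}. t (\<pi> p) x ^ (\<beta> \<circ> \<rho>) p)" .
  qed
  finally show ?thesis by simp
qed

lemma prod_split2:
  assumes "finite S" "p \<in> S" "q \<in> S" "p \<noteq> q"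
  shows "(\<Prod>r\<in>S. f r) = f p * f q * (\<Prod>r\<in>S - {p, q}. f r)"
proof -
  have "(\<Prod>r\<in>S. f r) = f p * (\<Prod>r\<in>S - {p}. f r)" using assms by (simp add: prod.remove)
  also have "(\<Prod>r\<in>S - {p}. f r) = f q * (\<Prod>r\<in>S - {p} - {q}. f r)"
    using assms by (intro prod.remove) auto
  also have "S - {p} - {q} = S - {p, q}" by auto
  finally show ?thesis by (simp add: mult.assoc)
qed

lemma G_smooth:
  assumes H: "\<And>i. i \<in> {1..d} \<Longrightarrow> sos (t i) \<and> poly_fun (t i)"
    and pq: "p \<in> {1..d}" "q \<in> {1..d}" "p \<noteq> q" and bp: "\<beta> p = 2" and bq: "\<beta> q = 0"
  shows "sos (\<lambda>x. G d t \<beta> x - G d t (\<beta>(p := 1, q := 1)) x)"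
proof -
  let ?\<tau> = "Transposition.transpose p q"
  let ?P = "{\<pi>. \<pi> permutes {1..d}}"
  let ?\<beta>' = "\<beta>(p := 1, q := 1)"
  define R where "R \<pi> x = (\<Prod>r\<in>{1..d} - {p, q}. t (\<pi> r) x ^ \<beta> r)" for \<pi> x
  have tau: "?\<tau> permutes {1..d}" using pq(1,2) by (rule permutes_swap_id)
  have key: "(\<Prod>r\<in>{1..d}. t (\<pi> r) x ^ \<beta> r) + (\<Prod>r\<in>{1..d}. t (\<pi> r) x ^ (\<beta> \<circ> ?\<tau>) r)
        - 2 * (\<Prod>r\<in>{1..d}. t (\<pi> r) x ^ ?\<beta>' r) = R \<pi> x * (t (\<pi> p) x - t (\<pi> q) x)^2" for \<pi> x
  proof -
    have e1: "(\<Prod>r\<in>{1..d} - {p, q}. t (\<pi> r) x ^ (\<beta> \<circ> ?\<tau>) r) = R \<pi> x"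
      unfolding R_def by (rule prod.cong) (auto simp: transpose_def)
    have e2: "(\<Prod>r\<in>{1..d} - {p, q}. t (\<pi> r) x ^ ?\<beta>' r) = R \<pi> x"
      unfolding R_def by (rule prod.cong) auto
    have s1: "(\<Prod>r\<in>{1..d}. t (\<pi> r) x ^ \<beta> r) = (t (\<pi> p) x)^2 * R \<pi> x"
      using prod_split2[OF _ pq, of "\<lambda>r. t (\<pi> r) x ^ \<beta> r"] bp bq unfolding R_def by (simp add: power2_eq_square)
    have s2: "(\<Prod>r\<in>{1..d}. t (\<pi> r) x ^ (\<beta> \<circ> ?\<tau>) r) = (t (\<pi> q) x)^2 * R \<pi> x"
      using prod_split2[OF _ pq, of "\<lambda>r. t (\<pi> r) x ^ (\<beta> \<circ> ?\<tau>) r"] bp bq e1 by (simp add: power2_eq_square)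
    have s3: "(\<Prod>r\<in>{1..d}. t (\<pi> r) x ^ ?\<beta>' r) = t (\<pi> p) x * t (\<pi> q) x * R \<pi> x"
      using prod_split2[OF _ pq, of "\<lambda>r. t (\<pi> r) x ^ ?\<beta>' r"] pq e2 by simp
    show ?thesis unfolding s1 s2 s3 by (simp add: power2_diff algebra_simps)
  qed
  have "sos (\<lambda>x. \<Sum>\<pi>\<in>?P. R \<pi> x * (t (\<pi> p) x - t (\<pi> q) x)^2)"
  proof (rule sos_sum, rule sos_mult)
    fix \<pi> assume "\<pi> \<in> ?P"
    then have perm: "\<pi> permutes {1..d}" by simp
    have pin: "\<pi> r \<in> {1..d}" if "r \<in> {1..d}" for r
      unfolding permutes_in_image[OF perm] by (rule that)
    show "sos (R \<pi>)" unfolding R_def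
      by (intro sos_prod sos_power) (use H pin in auto)
    show "sos (\<lambda>x. (t (\<pi> p) x - t (\<pi> q) x)\<^sup>2)"
      by (intro sos_sq pf_sub) (use H pin pq in auto)
  qed
  then have "sos (\<lambda>x. 1/2 * (\<Sum>\<pi>\<in>?P. R \<pi> x * (t (\<pi> p) x - t (\<pi> q) x)^2))"
    by (rule sos_scale[rotated]) simp
  then show ?thesis
  proof (rule sos_cong)
    fix x
    let ?A = "\<lambda>\<pi>. (\<Prod>r\<in>{1..d}. t (\<pi> r) x ^ \<beta> r)"
    let ?B = "\<lambda>\<pi>. (\<Prod>r\<in>{1..d}. t (\<pi> r) x ^ (\<beta> \<circ> ?\<tau>) r)"
    let ?C = "\<lambda>\<pi>. (\<Prod>r\<in>{1..d}. t (\<pi> r) x ^ ?\<beta>' r)"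
    have "(\<Sum>\<pi>\<in>?P. R \<pi> x * (t (\<pi> p) x - t (\<pi> q) x)^2) = (\<Sum>\<pi>\<in>?P. ?A \<pi> + ?B \<pi> - 2 * ?C \<pi>)"
      by (rule sum.cong[OF refl]) (rule key[symmetric])
    also have "\<dots> = sum ?A ?P + sum ?B ?P - 2 * sum ?C ?P"
      by (simp only: sum.distrib sum_subtractf sum_distrib_left)
    also have "\<dots> = G d t \<beta> x + G d t (\<beta> \<circ> ?\<tau>) x - 2 * G d t ?\<beta>' x"
      by (simp only: G_def)
    also have "G d t (\<beta> \<circ> ?\<tau>) x = G d t \<beta> x" by (rule G_perm[OF tau])
    finally show "1/2 * (\<Sum>\<pi>\<in>?P. R \<pi> x * (t (\<pi> p) x - t (\<pi> q) x)^2) = G d t \<beta> x - G d t ?\<beta>' x"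
      by linarith
  qed
qed


lemma sum_split2:
  assumes "finite S" "p \<in> S" "q \<in> S" "p \<noteq> q"
  shows "(\<Sum>r\<in>S. f r) = f p + f q + (\<Sum>r\<in>S - {p, q}. f r)"
proof -
  have "(\<Sum>r\<in>S. f r) = f p + (\<Sum>r\<in>S - {p}. f r)" using assms by (simp add: sum.remove)
  also have "(\<Sum>r\<in>S - {p}. f r) = f q + (\<Sum>r\<in>S - {p} - {q}. f r)"
    using assms by (intro sum.remove) auto
  also have "S - {p} - {q} = S - {p, q}" by auto
  finally show ?thesis by (simp add: add.assoc)
qed

lemma sum_ind: "finite D \<Longrightarrow> A \<subseteq> D \<Longrightarrow> (\<Sum>r\<in>D. (if r \<in> A then 1 else 0) :: nat) = card A"
  by (simp add: sum.If_cases Int_absorb1)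

lemma prod_ind:
  fixes f :: "'a \<Rightarrow> real"
  assumes "finite D" "A \<subseteq> D"
  shows "(\<Prod>r\<in>D. f r ^ (if r \<in> A then 1 else 0)) = (\<Prod>r\<in>A. f r)"
proof -
  have "(\<Prod>r\<in>D. f r ^ (if r \<in> A then 1 else 0)) = (\<Prod>r\<in>D. if r \<in> A then f r else 1)"
    by (rule prod.cong) auto
  also have "\<dots> = (\<Prod>r\<in>D \<inter> A. f r)" using assms by (simp add: prod.inter_restrict)
  also have "D \<inter> A = A" using assms by auto
  finally show ?thesis .
qed

lemma G_reduce:
  assumes H: "\<And>i. i \<in> {1..d} \<Longrightarrow> sos (t i) \<and> poly_fun (t i)" and sd: "s \<le> d"
  shows "\<forall>\<beta>. (\<forall>r. \<beta> r \<le> 2) \<longrightarrow> (\<forall>r. r \<notin> {1..d} \<longrightarrow> \<beta> r = 0) \<longrightarrow> (\<Sum>r\<in>{1..d}. \<beta> r) = s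
     \<longrightarrow> card {r\<in>{1..d}. \<beta> r = 2} = n
     \<longrightarrow> sos (\<lambda>x. G d t \<beta> x - G d t (\<lambda>r. if r \<in> {1..s} then 1 else 0) x)"
proof (induction n)
  case 0
  show ?case
  proof (intro allI impI)
    fix \<beta> :: "nat \<Rightarrow> nat"
    assume le2: "\<forall>r. \<beta> r \<le> 2" and out: "\<forall>r. r \<notin> {1..d} \<longrightarrow> \<beta> r = 0"
      and sm: "(\<Sum>r\<in>{1..d}. \<beta> r) = s" and c0: "card {r\<in>{1..d}. \<beta> r = 2} = 0"
    have no2: "\<beta> r \<noteq> 2" if "r \<in> {1..d}" for r using c0 that by auto
    define J where "J = {r\<in>{1..d}. \<beta> r = 1}"
    have \<beta>J: "\<beta> r = (if r \<in> J then 1 else 0)" for r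
    proof (cases "r \<in> {1..d}")
      case True
      have "\<beta> r \<le> 2" "\<beta> r \<noteq> 2" using no2[OF True] le2 by auto
      then have "\<beta> r = 0 \<or> \<beta> r = 1" by linarith
      then show ?thesis using True unfolding J_def by auto
    next
      case False then show ?thesis using out unfolding J_def by auto
    qed
    have JD: "J \<subseteq> {1..d}" unfolding J_def by auto
    have "(\<Sum>r\<in>{1..d}. \<beta> r) = (\<Sum>r\<in>{1..d}. (if r \<in> J then 1 else 0))"
      by (rule sum.cong[OF refl]) (rule \<beta>J)
    then have "card J = s"
      using sm sum_ind[OF _ JD] by simp
    then obtain \<rho> where \<rho>: "\<rho> permutes {1..d}" "\<rho> ` {1..s} = J"
      using ex_perm_image[of "{1..d}" "{1..s}" J] sd JD by auto
    have "(\<lambda>r. if r \<in> {1..s} then 1 else 0) = \<beta> \<circ> \<rho>"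
    proof
      fix r
      show "(if r \<in> {1..s} then 1 else 0) = (\<beta> \<circ> \<rho>) r"
      proof (cases "r \<in> {1..d}")
        case True
        have "\<rho> r \<in> \<rho> ` {1..s} \<longleftrightarrow> r \<in> {1..s}"
          by (rule inj_image_mem_iff[OF permutes_inj[OF \<rho>(1)]])
        then have "\<rho> r \<in> J \<longleftrightarrow> r \<in> {1..s}" using \<rho>(2) by simp
        then show ?thesis by (simp add: \<beta>J)
      next
        case False
        then have "\<rho> r = r" using permutes_not_in[OF \<rho>(1)] by auto
        then show ?thesis using False sd out by auto
      qed
    qed
    then have "\<And>x. G d t (\<lambda>r. if r \<in> {1..s} then 1 else 0) x = G d t \<beta> x"
      using G_perm[OF \<rho>(1)] by simp
    then show "sos (\<lambda>x. G d t \<beta> x - G d t (\<lambda>r. if r \<in> {1..s} then 1 else 0) x)"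
      by (intro sos_cong[OF sos_0]) simp
  qed
next
  case (Suc n)
  show ?case
  proof (intro allI impI)
    fix \<beta> :: "nat \<Rightarrow> nat"
    assume le2: "\<forall>r. \<beta> r \<le> 2" and out: "\<forall>r. r \<notin> {1..d} \<longrightarrow> \<beta> r = 0"
      and sm: "(\<Sum>r\<in>{1..d}. \<beta> r) = s" and cn: "card {r\<in>{1..d}. \<beta> r = 2} = Suc n"
    obtain p where p: "p \<in> {1..d}" "\<beta> p = 2"
      using cn by (metis (mono_tags, lifting) card.empty empty_Collect_eq nat.distinct(1))
    have "\<exists>q\<in>{1..d}. \<beta> q = 0"
    proof (rule ccontr)
      assume "\<not> ?thesis"
      then have ge1: "\<forall>r\<in>{1..d}. 1 \<le> \<beta> r" by auto
      have A: "(\<Sum>r\<in>{1..d}. \<beta> r) = \<beta> p + (\<Sum>r\<in>{1..d} - {p}. \<beta> r)"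
        using p by (simp add: sum.remove)
      have "(\<Sum>r\<in>{1..d} - {p}. \<beta> r) \<ge> (\<Sum>r\<in>{1..d} - {p}. 1)"
        using ge1 by (intro sum_mono) auto
      moreover have "(\<Sum>r\<in>{1..d} - {p}. (1::nat)) = d - 1" using p by simp
      ultimately have B: "(\<Sum>r\<in>{1..d} - {p}. \<beta> r) + 1 \<ge> d" by linarith
      have "(\<Sum>r\<in>{1..d}. \<beta> r) \<ge> d + 1" using A B p by linarith
      then show False using sm sd by simp
    qed
    then obtain q where q: "q \<in> {1..d}" "\<beta> q = 0" by blast
    have pq: "p \<noteq> q" using p q by auto
    define \<beta>' where "\<beta>' = \<beta>(p := 1, q := 1)"
    have le2': "\<forall>r. \<beta>' r \<le> 2" using le2 by (simp add: \<beta>'_def)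
    have out': "\<forall>r. r \<notin> {1..d} \<longrightarrow> \<beta>' r = 0" using out p q by (auto simp: \<beta>'_def)
    have "(\<Sum>r\<in>{1..d}. \<beta>' r) = \<beta>' p + \<beta>' q + (\<Sum>r\<in>{1..d} - {p, q}. \<beta>' r)"
      using sum_split2[OF _ p(1) q(1) pq, of \<beta>'] by simp
    also have "(\<Sum>r\<in>{1..d} - {p, q}. \<beta>' r) = (\<Sum>r\<in>{1..d} - {p, q}. \<beta> r)"
      by (rule sum.cong) (auto simp: \<beta>'_def)
    also have "\<beta>' p + \<beta>' q + (\<Sum>r\<in>{1..d} - {p, q}. \<beta> r) = \<beta> p + \<beta> q + (\<Sum>r\<in>{1..d} - {p, q}. \<beta> r)"
      using p q pq by (simp add: \<beta>'_def)
    also have "\<dots> = (\<Sum>r\<in>{1..d}. \<beta> r)"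
      using sum_split2[OF _ p(1) q(1) pq, of \<beta>] by simp
    finally have sm': "(\<Sum>r\<in>{1..d}. \<beta>' r) = s" using sm by simp
    have "{r\<in>{1..d}. \<beta>' r = 2} = {r\<in>{1..d}. \<beta> r = 2} - {p}"
      using p q pq by (auto simp: \<beta>'_def)
    then have cn': "card {r\<in>{1..d}. \<beta>' r = 2} = n" using cn p by simp
    have a: "sos (\<lambda>x. G d t \<beta>' x - G d t (\<lambda>r. if r \<in> {1..s} then 1 else 0) x)"
      using Suc.IH le2' out' sm' cn' by blast
    have b: "sos (\<lambda>x. G d t \<beta> x - G d t \<beta>' x)"
      unfolding \<beta>'_def by (rule G_smooth[OF H p(1) q(1) pq p(2) q(2)])
    show "sos (\<lambda>x. G d t \<beta> x - G d t (\<lambda>r. if r \<in> {1..s} then 1 else 0) x)"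
      by (rule sos_cong[OF sos_add[OF a b]]) simp
  qed
qed


lemma fib_le:
  fixes D K A B :: "'a set"
  assumes fD: "finite D" and \<rho>: "\<rho> permutes D" "\<rho> ` A = B"
  shows "card {\<pi>. \<pi> permutes D \<and> \<pi> ` K = A} \<le> card {\<pi>. \<pi> permutes D \<and> \<pi> ` K = B}"
proof (rule card_inj_on_le[where f = "\<lambda>\<pi>. \<rho> \<circ> \<pi>"])
  show "inj_on ((\<circ>) \<rho>) {\<pi>. \<pi> permutes D \<and> \<pi> ` K = A}"
  proof (rule inj_onI)
    fix \<pi>1 \<pi>2 assume "\<rho> \<circ> \<pi>1 = \<rho> \<circ> \<pi>2"
    then show "\<pi>1 = \<pi>2" using permutes_inj[OF \<rho>(1)] by (metis fun.inj_map_strong inj_eq)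
  qed
  show "(\<circ>) \<rho> ` {\<pi>. \<pi> permutes D \<and> \<pi> ` K = A} \<subseteq> {\<pi>. \<pi> permutes D \<and> \<pi> ` K = B}"
    using \<rho> by (auto simp: permutes_compose image_comp[symmetric])
  show "finite {\<pi>. \<pi> permutes D \<and> \<pi> ` K = B}"
    by (rule finite_subset[OF _ finite_permutations[OF fD]]) auto
qed

lemma fib_eq:
  fixes D K A B :: "'a set"
  assumes fD: "finite D" and \<rho>: "\<rho> permutes D" "\<rho> ` A = B"
  shows "card {\<pi>. \<pi> permutes D \<and> \<pi> ` K = A} = card {\<pi>. \<pi> permutes D \<and> \<pi> ` K = B}"
proof (rule antisym)
  show "card {\<pi>. \<pi> permutes D \<and> \<pi> ` K = A} \<le> card {\<pi>. \<pi> permutes D \<and> \<pi> ` K = B}"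
    by (rule fib_le[OF fD \<rho>])
  have "inv \<rho> permutes D" using \<rho>(1) by (rule permutes_inv)
  moreover have "inv \<rho> ` B = A" using \<rho> permutes_inj[OF \<rho>(1)] by (metis image_inv_f_f)
  ultimately show "card {\<pi>. \<pi> permutes D \<and> \<pi> ` K = B} \<le> card {\<pi>. \<pi> permutes D \<and> \<pi> ` K = A}"
    by (rule fib_le[OF fD])
qed

definition Pj :: "nat \<Rightarrow> (nat \<Rightarrow> ('v \<Rightarrow> real) \<Rightarrow> real) \<Rightarrow> (nat \<Rightarrow> nat) \<Rightarrow> ('v \<Rightarrow> real) \<Rightarrow> real" where
  "Pj j t \<pi> x = (\<Prod>p\<in>{1..j}. t (\<pi> p) x)"

lemma sum_Pj:
  assumes "j \<le> d"
  shows "(\<Sum>\<pi>\<in>{\<pi>. \<pi> permutes {1..d}}. Pj j t \<pi> x) = fact d * Esym d j (\<lambda>i. t i x)"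
proof -
  let ?P = "{\<pi>. \<pi> permutes {1..d}}"
  let ?I = "{I. I \<subseteq> {1..d} \<and> card I = j}"
  let ?F = "\<lambda>I. \<Prod>i\<in>I. t i x"
  let ?fib = "\<lambda>I. {\<pi>. \<pi> permutes {1..d} \<and> \<pi> ` {1..j} = I}"
  have fP: "finite ?P" by (rule finite_permutations) simp
  have fI: "finite ?I" by (rule finite_subset[of _ "Pow {1..d}"]) auto
  have img: "(\<lambda>\<pi>. \<pi> ` {1..j}) ` ?P \<subseteq> ?I"
  proof
    fix I assume "I \<in> (\<lambda>\<pi>. \<pi> ` {1..j}) ` ?P"
    then obtain \<pi> where \<pi>: "\<pi> permutes {1..d}" "I = \<pi> ` {1..j}" by auto
    have "I \<subseteq> {1..d}" using \<pi> assms permutes_image[OF \<pi>(1)] by auto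
    moreover have "card I = j" using \<pi> card_image[OF inj_on_subset[OF permutes_inj[OF \<pi>(1)]]] by simp
    ultimately show "I \<in> ?I" by simp
  qed
  have Pj_eq: "Pj j t \<pi> x = ?F (\<pi> ` {1..j})" if "\<pi> \<in> ?P" for \<pi>
  proof -
    have "inj_on \<pi> {1..j}" using permutes_inj[of \<pi> "{1..d}"] that by (auto intro: inj_on_subset)
    then show ?thesis unfolding Pj_def by (simp add: prod.reindex)
  qed
  define c where "c = card (?fib {1..j})"
  have fibc: "card (?fib I) = c" if II: "I \<in> ?I" for I
  proof -
    obtain \<rho> where "\<rho> permutes {1..d}" "\<rho> ` {1..j} = I"
      using ex_perm_image[of "{1..d}" "{1..j}" I] II assms by auto
    then show ?thesis unfolding c_def using fib_eq[of "{1..d}" \<rho> "{1..j}" I "{1..j}"] by simp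
  qed
  have grp: "(\<Sum>\<pi>\<in>?P. g (\<pi> ` {1..j})) = (\<Sum>I\<in>?I. of_nat (card (?fib I)) * g I)" for g :: "nat set \<Rightarrow> real"
  proof -
    have "(\<Sum>\<pi>\<in>?P. g (\<pi> ` {1..j})) = (\<Sum>I\<in>?I. \<Sum>\<pi>\<in>{\<pi>\<in>?P. \<pi> ` {1..j} = I}. g (\<pi> ` {1..j}))"
      by (rule sum.group[OF fP fI img, symmetric])
    also have "\<dots> = (\<Sum>I\<in>?I. of_nat (card (?fib I)) * g I)"
      by (rule sum.cong[OF refl]) simp
    finally show ?thesis .
  qed
  have "real (fact d) = (\<Sum>\<pi>\<in>?P. (\<lambda>_. 1) (\<pi> ` {1..j}))"
    using card_permutations[of "{1..d}" d] by simp
  also have "\<dots> = (\<Sum>I\<in>?I. of_nat (card (?fib I)) * 1)" by (rule grp)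
  also have "\<dots> = of_nat c * of_nat (d choose j)"
    using fibc n_subsets[of "{1..d}" j] by simp
  finally have cfact: "real (fact d) = of_nat c * of_nat (d choose j)" .
  have "(\<Sum>\<pi>\<in>?P. Pj j t \<pi> x) = (\<Sum>\<pi>\<in>?P. ?F (\<pi> ` {1..j}))" by (rule sum.cong[OF refl]) (rule Pj_eq)
  also have "\<dots> = (\<Sum>I\<in>?I. of_nat (card (?fib I)) * ?F I)" by (rule grp)
  also have "\<dots> = of_nat c * (\<Sum>I\<in>?I. ?F I)" using fibc by (simp add: sum_distrib_left)
  also have "\<dots> = fact d * Esym d j (\<lambda>i. t i x)"
  proof -
    have "(d choose j) > 0" using assms by simp
    then show ?thesis unfolding Esym_def using cfact by (simp add: field_simps)
  qed
  finally show ?thesis .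
qed

lemma G_base:
  assumes "j \<le> d"
  shows "G d t (\<lambda>r. if r \<in> {1..j} then 1 else 0) x = fact d * Esym d j (\<lambda>i. t i x)"
proof -
  have "G d t (\<lambda>r. if r \<in> {1..j} then 1 else 0) x = (\<Sum>\<pi>\<in>{\<pi>. \<pi> permutes {1..d}}. Pj j t \<pi> x)"
    unfolding G_def Pj_def
    by (rule sum.cong[OF refl], rule prod_ind) (use assms in auto)
  then show ?thesis using sum_Pj[OF assms] by simp
qed

lemma Esym_sos:
  assumes H: "\<And>i. i \<in> {1..d} \<Longrightarrow> sos (t i) \<and> poly_fun (t i)"
  shows "sos (\<lambda>x. Esym d j (\<lambda>i. t i x))"
  unfolding Esym_def divide_inverse
  apply (subst mult.commute)
  apply (rule sos_scale)
   apply simp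
  apply (rule sos_sum)
  apply (rule sos_prod)
  using H by auto


lemma E_prod:
  assumes H: "\<And>i. i \<in> {1..d} \<Longrightarrow> sos (t i) \<and> poly_fun (t i)" and ab: "a + b \<le> d"
  shows "sos (\<lambda>x. Esym d a (\<lambda>i. t i x) * Esym d b (\<lambda>i. t i x) - Esym d (a + b) (\<lambda>i. t i x))"
proof -
  let ?P = "{\<pi>. \<pi> permutes {1..d}}"
  define ind where "ind A r = (if r \<in> A then 1 else 0 :: nat)" for A :: "nat set" and r :: nat
  define \<beta> where "\<beta> \<tau> r = ind {1..a} r + ind (\<tau> ` {1..b}) r" for \<tau> :: "nat \<Rightarrow> nat" and r
  let ?base = "\<lambda>r. if r \<in> {1..a+b} then 1 else (0::nat)"
  have fP: "finite ?P" by (rule finite_permutations) simp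
  have cP: "card ?P = fact d" using card_permutations[of "{1..d}" d] by simp
  have tauD: "\<tau> ` {1..b} \<subseteq> {1..d}" if "\<tau> \<in> ?P" for \<tau>
    using that ab permutes_image[of \<tau> "{1..d}"] by auto
  have each: "sos (\<lambda>x. G d t (\<beta> \<tau>) x - G d t ?base x)" if \<tau>: "\<tau> \<in> ?P" for \<tau>
  proof -
    have "\<forall>r. \<beta> \<tau> r \<le> 2" by (simp add: \<beta>_def ind_def)
    moreover have "\<forall>r. r \<notin> {1..d} \<longrightarrow> \<beta> \<tau> r = 0"
      using tauD[OF \<tau>] ab by (auto simp: \<beta>_def ind_def)
    moreover have "(\<Sum>r\<in>{1..d}. \<beta> \<tau> r) = a + b"
    proof -
      have "(\<Sum>r\<in>{1..d}. \<beta> \<tau> r) = card {1..a} + card (\<tau> ` {1..b})"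
        unfolding \<beta>_def ind_def sum.distrib
        by (subst sum_ind, simp, use ab in simp, subst sum_ind, simp, rule tauD[OF \<tau>], simp)
      also have "card (\<tau> ` {1..b}) = b"
        using \<tau> card_image[OF inj_on_subset[OF permutes_inj[of \<tau> "{1..d}"]]] by simp
      finally show ?thesis by simp
    qed
    ultimately show ?thesis
      using G_reduce[where t = t and d = d and s = "a + b", OF H ab, where n = "card {r\<in>{1..d}. \<beta> \<tau> r = 2}"] by blast
  qed
  have "sos (\<lambda>x. \<Sum>\<tau>\<in>?P. G d t (\<beta> \<tau>) x - G d t ?base x)"
    by (rule sos_sum) (rule each)
  then have "sos (\<lambda>x. (1 / (real (fact d))^2) * (\<Sum>\<tau>\<in>?P. G d t (\<beta> \<tau>) x - G d t ?base x))"
    by (rule sos_scale[rotated]) simp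
  then show ?thesis
  proof (rule sos_cong)
    fix x
    have termeq: "Pj a t \<pi> x * Pj b t (\<pi> \<circ> \<tau>) x = (\<Prod>r\<in>{1..d}. t (\<pi> r) x ^ \<beta> \<tau> r)"
      if \<pi>: "\<pi> \<in> ?P" and \<tau>: "\<tau> \<in> ?P" for \<pi> \<tau>
    proof -
      have 1: "Pj a t \<pi> x = (\<Prod>r\<in>{1..d}. t (\<pi> r) x ^ ind {1..a} r)"
        unfolding Pj_def ind_def by (rule prod_ind[symmetric]) (use ab in auto)
      have "inj_on \<tau> {1..b}" using permutes_inj[of \<tau> "{1..d}"] \<tau> by (auto intro: inj_on_subset)
      then have "Pj b t (\<pi> \<circ> \<tau>) x = (\<Prod>r\<in>\<tau> ` {1..b}. t (\<pi> r) x)"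
        unfolding Pj_def by (simp add: prod.reindex)
      also have "\<dots> = (\<Prod>r\<in>{1..d}. t (\<pi> r) x ^ ind (\<tau> ` {1..b}) r)"
        unfolding ind_def by (rule prod_ind[symmetric]) (use tauD[OF \<tau>] in auto)
      finally have 2: "Pj b t (\<pi> \<circ> \<tau>) x = (\<Prod>r\<in>{1..d}. t (\<pi> r) x ^ ind (\<tau> ` {1..b}) r)" .
      show ?thesis unfolding 1 2 \<beta>_def by (simp add: power_add prod.distrib)
    qed
    have "(real (fact d))^2 * (Esym d a (\<lambda>i. t i x) * Esym d b (\<lambda>i. t i x))
        = (\<Sum>\<pi>\<in>?P. Pj a t \<pi> x) * (\<Sum>\<sigma>\<in>?P. Pj b t \<sigma> x)"
      using sum_Pj[of a d t x] sum_Pj[of b d t x] ab by (simp add: power2_eq_square)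
    also have "\<dots> = (\<Sum>\<pi>\<in>?P. \<Sum>\<sigma>\<in>?P. Pj a t \<pi> x * Pj b t \<sigma> x)"
      by (simp add: sum_product)
    also have "\<dots> = (\<Sum>\<pi>\<in>?P. \<Sum>\<tau>\<in>?P. Pj a t \<pi> x * Pj b t (\<pi> \<circ> \<tau>) x)"
    proof (rule sum.cong[OF refl])
      fix \<pi> assume "\<pi> \<in> ?P"
      then show "(\<Sum>\<sigma>\<in>?P. Pj a t \<pi> x * Pj b t \<sigma> x) = (\<Sum>\<tau>\<in>?P. Pj a t \<pi> x * Pj b t (\<pi> \<circ> \<tau>) x)"
        using setum_permutations_compose_left[of \<pi> "{1..d}" "\<lambda>\<sigma>. Pj a t \<pi> x * Pj b t \<sigma> x"] by simp
    qed
    also have "\<dots> = (\<Sum>\<tau>\<in>?P. \<Sum>\<pi>\<in>?P. Pj a t \<pi> x * Pj b t (\<pi> \<circ> \<tau>) x)"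
      by (rule sum.swap)
    also have "\<dots> = (\<Sum>\<tau>\<in>?P. G d t (\<beta> \<tau>) x)"
      unfolding G_def by (intro sum.cong refl termeq) auto
    finally have A: "(real (fact d))^2 * (Esym d a (\<lambda>i. t i x) * Esym d b (\<lambda>i. t i x)) = (\<Sum>\<tau>\<in>?P. G d t (\<beta> \<tau>) x)" .
    have B: "(\<Sum>\<tau>\<in>?P. G d t ?base x) = (real (fact d))^2 * Esym d (a + b) (\<lambda>i. t i x)"
      using G_base[OF ab, of t x] cP by (simp add: power2_eq_square)
    have "(\<Sum>\<tau>\<in>?P. G d t (\<beta> \<tau>) x - G d t ?base x) =
        (real (fact d))^2 * (Esym d a (\<lambda>i. t i x) * Esym d b (\<lambda>i. t i x) - Esym d (a + b) (\<lambda>i. t i x))"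
      unfolding sum_subtractf A[symmetric] B by (simp add: algebra_simps)
    then show "(1 / (real (fact d))^2) * (\<Sum>\<tau>\<in>?P. G d t (\<beta> \<tau>) x - G d t ?base x) =
        Esym d a (\<lambda>i. t i x) * Esym d b (\<lambda>i. t i x) - Esym d (a + b) (\<lambda>i. t i x)"
      by simp
  qed
qed

lemma Esym_0: "Esym d 0 f = 1"
proof -
  have "{I. I \<subseteq> {1..d} \<and> card I = 0} = {{}}"
    by (auto simp: card_eq_0_iff dest: finite_subset[OF _ finite_atLeastAtMost])
  then show ?thesis unfolding Esym_def by simp
qed

lemma E_pow:
  assumes H: "\<And>i. i \<in> {1..d} \<Longrightarrow> sos (t i) \<and> poly_fun (t i)"
  shows "m * k \<le> d \<Longrightarrow> sos (\<lambda>x. Esym d k (\<lambda>i. t i x) ^ m - Esym d (m * k) (\<lambda>i. t i x))"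
proof (induction m)
  case 0 then show ?case by (simp add: Esym_0 sos_0)
next
  case (Suc m)
  then have mk: "m * k \<le> d" by simp
  have mk2: "k + m * k \<le> d" using Suc by simp
  have 1: "sos (\<lambda>x. Esym d k (\<lambda>i. t i x) * (Esym d k (\<lambda>i. t i x) ^ m - Esym d (m * k) (\<lambda>i. t i x)))"
    by (rule sos_mult[OF Esym_sos[OF H] Suc.IH[OF mk]])
  have 2: "sos (\<lambda>x. Esym d k (\<lambda>i. t i x) * Esym d (m * k) (\<lambda>i. t i x) - Esym d (k + m * k) (\<lambda>i. t i x))"
    by (rule E_prod[OF H mk2])
  show ?case
    by (rule sos_cong[OF sos_add[OF 1 2]]) (simp add: algebra_simps)
qed


lemma pf_Q: "poly_fun (Q M)"
  unfolding Q_def by (intro pf_sum pf_mult pf_var pf_const)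

lemma sos_prod_bound:
  assumes "finite I" "\<forall>i\<in>I. sos (t i) \<and> sos (\<lambda>x. c x - t i x)" "sos c"
  shows "sos (\<lambda>x. c x ^ card I - (\<Prod>i\<in>I. t i x))"
  using assms
proof (induction I rule: finite_induct)
  case empty then show ?case by (simp add: sos_0)
next
  case (insert a I)
  have IH: "sos (\<lambda>x. c x ^ card I - (\<Prod>i\<in>I. t i x))" using insert by simp
  have pI: "sos (\<lambda>x. \<Prod>i\<in>I. t i x)" using insert by (intro sos_prod) auto
  have 1: "sos (\<lambda>x. c x * (c x ^ card I - (\<Prod>i\<in>I. t i x)))" by (rule sos_mult[OF insert.prems(2) IH])
  have 2: "sos (\<lambda>x. (c x - t a x) * (\<Prod>i\<in>I. t i x))" using insert by (intro sos_mult pI) auto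
  show ?case
    by (rule sos_cong[OF sos_add[OF 1 2]]) (use insert in \<open>simp add: algebra_simps\<close>)
qed

lemma SRel_gen_mono:
  fixes t :: "nat \<Rightarrow> ('v::finite \<Rightarrow> real) \<Rightarrow> real"
  assumes k: "0 < k" and m: "0 < m" and mkd: "m * k \<le> d"
    and T: "\<forall>i\<in>{1..d}. \<exists>M. (\<forall>x. t i x = Q M x) \<and> (\<forall>x. 0 \<le> t i x)"
  shows "SRel_gen d (m * k) (\<lambda>x. \<Sum>j\<in>UNIV. (x j)^2) t \<le> SRel_gen d k (\<lambda>x. \<Sum>j\<in>UNIV. (x j)^2) t"
proof -
  define N where "N = (\<lambda>x::'v \<Rightarrow> real. \<Sum>j\<in>UNIV. (x j)^2)"
  have sN: "sos N" unfolding N_def by (intro sos_sum sos_sq pf_var)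
  have H: "sos (t i) \<and> poly_fun (t i)" if ii: "i \<in> {1..d}" for i
  proof -
    obtain M where M: "\<forall>x. t i x = Q M x" "\<forall>x. 0 \<le> t i x" using T ii by blast
    then have e: "t i = Q M" by (intro ext) simp
    have "\<forall>x. 0 \<le> Q M x" using M(2) unfolding e .
    then show ?thesis unfolding e using sos_Q pf_Q by blast
  qed
  have "k \<le> m * k" using m by (cases m) auto
  then have kd: "k \<le> d" using mkd by linarith
  let ?A = "{root k lam | lam. lam \<ge> 0 \<and> sos (\<lambda>x. lam * (N x)^k - Esym d k (\<lambda>i. t i x))}"
  let ?B = "{root (m * k) lam | lam. lam \<ge> 0 \<and> sos (\<lambda>x. lam * (N x)^(m * k) - Esym d (m * k) (\<lambda>i. t i x))}"
  have nonempty: "?A \<noteq> {}"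
  proof -
    have "\<forall>i\<in>{1..d}. \<exists>c\<ge>0. sos (\<lambda>x. c * N x - t i x)"
    proof
      fix i assume i: "i \<in> {1..d}"
      obtain M where M: "\<forall>x. t i x = Q M x" "\<forall>x. 0 \<le> t i x" using T i by blast
      then have "\<forall>x. 0 \<le> Q M x" by metis
      from Q_bound[OF this] obtain c where "c \<ge> 0" "sos (\<lambda>x. c * N x - Q M x)" unfolding N_def by blast
      then show "\<exists>c\<ge>0. sos (\<lambda>x. c * N x - t i x)" using M by auto
    qed
    then obtain cf where cf: "\<forall>i\<in>{1..d}. cf i \<ge> 0 \<and> sos (\<lambda>x. cf i * N x - t i x)" by metis
    define C where "C = (\<Sum>i\<in>{1..d}. cf i)"
    have C0: "C \<ge> 0" unfolding C_def using cf by (auto intro: sum_nonneg)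
    have Cb: "sos (\<lambda>x. C * N x - t i x)" if i: "i \<in> {1..d}" for i
    proof -
      have "cf i \<le> C" unfolding C_def using cf i by (intro member_le_sum) auto
      then have "sos (\<lambda>x. (C - cf i) * N x)" by (intro sos_scale sN) simp
      from sos_add[OF this] cf i have "sos (\<lambda>x. (C - cf i) * N x + (cf i * N x - t i x))" by auto
      then show ?thesis by (rule sos_cong) (simp add: algebra_simps)
    qed
    let ?I = "{I. I \<subseteq> {1..d} \<and> card I = k}"
    have fI: "finite ?I" by (rule finite_subset[of _ "Pow {1..d}"]) auto
    have each: "sos (\<lambda>x. (C * N x) ^ k - (\<Prod>i\<in>I. t i x))" if II: "I \<in> ?I" for I
    proof -
      have fI: "finite I" using II finite_subset by auto
      have "\<forall>i\<in>I. sos (t i) \<and> sos (\<lambda>x. C * N x - t i x)" using II Cb H by auto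
      from sos_prod_bound[OF fI this sos_scale[OF C0 sN]]
      show ?thesis using II by simp
    qed
    have "sos (\<lambda>x. (1 / real (d choose k)) * (\<Sum>I\<in>?I. (C * N x) ^ k - (\<Prod>i\<in>I. t i x)))"
      by (intro sos_scale sos_sum each) auto
    moreover have "(1 / real (d choose k)) * (\<Sum>I\<in>?I. (C * N x) ^ k - (\<Prod>i\<in>I. t i x))
       = C ^ k * (N x) ^ k - Esym d k (\<lambda>i. t i x)" for x
    proof -
      have "card ?I = d choose k" using n_subsets[of "{1..d}" k] by simp
      moreover have "(d choose k) > 0" using kd by simp
      ultimately show ?thesis unfolding Esym_def sum_subtractf
        by (simp add: field_simps power_mult_distrib)
    qed
    ultimately have "sos (\<lambda>x. C ^ k * (N x) ^ k - Esym d k (\<lambda>i. t i x))" by (rule sos_cong)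
    then have "root k (C ^ k) \<in> ?A" using C0 by auto
    then show ?thesis by blast
  qed
  have sub: "?A \<subseteq> ?B"
  proof
    fix y assume "y \<in> ?A"
    then obtain lam where lam: "y = root k lam" "lam \<ge> 0" "sos (\<lambda>x. lam * (N x)^k - Esym d k (\<lambda>i. t i x))"
      by blast
    define a where "a x = lam * (N x)^k" for x
    define b where "b x = Esym d k (\<lambda>i. t i x)" for x
    have sa: "sos a" unfolding a_def by (intro sos_scale lam(2) sos_power sN)
    have sb: "sos b" unfolding b_def by (rule Esym_sos[where t = t and d = d, OF H])
    have ab: "sos (\<lambda>x. a x - b x)" using lam(3) by (simp add: a_def b_def)
    have "sos (\<lambda>x. \<Sum>i<m. b x ^ (m - Suc i) * a x ^ i)"
      by (intro sos_sum sos_mult sos_power sa sb)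
    from sos_mult[OF ab this]
    have 1: "sos (\<lambda>x. (a x - b x) * (\<Sum>i<m. b x ^ (m - Suc i) * a x ^ i))" .
    have 2: "sos (\<lambda>x. b x ^ m - Esym d (m * k) (\<lambda>i. t i x))"
      unfolding b_def using E_pow[where t = t and d = d, OF H mkd] by blast
    have "sos (\<lambda>x. lam ^ m * (N x)^(m * k) - Esym d (m * k) (\<lambda>i. t i x))"
    proof (rule sos_cong[OF sos_add[OF 1 2]])
      fix x
      have "(a x - b x) * (\<Sum>i<m. b x ^ (m - Suc i) * a x ^ i) = a x ^ m - b x ^ m"
        by (rule power_diff_sumr2[symmetric])
      moreover have "a x ^ m = lam ^ m * (N x)^(m * k)"
        unfolding a_def by (simp add: power_mult_distrib power_mult mult.commute)
      ultimately show "(a x - b x) * (\<Sum>i<m. b x ^ (m - Suc i) * a x ^ i) + (b x ^ m - Esym d (m * k) (\<lambda>i. t i x))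
          = lam ^ m * (N x)^(m * k) - Esym d (m * k) (\<lambda>i. t i x)" by simp
    qed
    moreover have "root (m * k) (lam ^ m) = y"
    proof -
      have "root (m * k) (lam ^ m) = root k (root m (lam ^ m))"
        by (simp add: mult.commute real_root_mult_exp)
      also have "root m (lam ^ m) = lam" using m lam(2) by (rule real_root_power_cancel)
      finally show ?thesis using lam(1) by simp
    qed
    moreover have "lam ^ m \<ge> 0" using lam(2) by simp
    ultimately show "y \<in> ?B" by blast
  qed
  have bdd: "bdd_below ?B"
    by (rule bdd_belowI[of _ 0]) (auto simp: real_root_ge_zero)
  have "Inf ?B \<le> Inf ?A" by (rule cInf_superset_mono[OF nonempty bdd sub])
  then show ?thesis unfolding SRel_gen_def N_def by simp
qed


lemma real_case:
  fixes A :: "nat \<Rightarrow> real^'n^'n"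
  assumes k: "0 < k" and m: "0 < m" and mkd: "m * k \<le> d"
    and psd: "\<forall>i\<in>{1..d}. psd_real (A i)"
  shows "SRel_real d (m * k) A \<le> SRel_real d k A"
  unfolding SRel_real_def
proof (rule SRel_gen_mono[OF k m mkd])
  show "\<forall>i\<in>{1..d}. \<exists>M. (\<forall>x. (\<Sum>a\<in>UNIV. \<Sum>b\<in>UNIV. x a * A i $ a $ b * x b) = Q M x) \<and>
          (\<forall>x. 0 \<le> (\<Sum>a\<in>UNIV. \<Sum>b\<in>UNIV. x a * A i $ a $ b * x b))"
  proof
    fix i assume i: "i \<in> {1..d}"
    show "\<exists>M. (\<forall>x. (\<Sum>a\<in>UNIV. \<Sum>b\<in>UNIV. x a * A i $ a $ b * x b) = Q M x) \<and>
          (\<forall>x. 0 \<le> (\<Sum>a\<in>UNIV. \<Sum>b\<in>UNIV. x a * A i $ a $ b * x b))"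
    proof (intro exI conjI allI)
      fix x :: "'n \<Rightarrow> real"
      show "(\<Sum>a\<in>UNIV. \<Sum>b\<in>UNIV. x a * A i $ a $ b * x b) = Q (\<lambda>a b. A i $ a $ b) x"
        by (simp add: Q_def)
      have "0 \<le> vec_lambda x \<bullet> (A i *v vec_lambda x)" using psd i unfolding psd_real_def by blast
      also have "vec_lambda x \<bullet> (A i *v vec_lambda x) = (\<Sum>a\<in>UNIV. \<Sum>b\<in>UNIV. x a * A i $ a $ b * x b)"
        by (simp add: inner_vec_def matrix_vector_mult_def sum_distrib_left mult.assoc)
      finally show "0 \<le> (\<Sum>a\<in>UNIV. \<Sum>b\<in>UNIV. x a * A i $ a $ b * x b)" .
    qed
  qed
qed

lemma sum_pair_bool:
  fixes f :: "'n::finite \<times> bool \<Rightarrow> real"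
  shows "(\<Sum>a\<in>UNIV. f a) = (\<Sum>i\<in>UNIV. f (i, True) + f (i, False))"
proof -
  have "(\<Sum>a\<in>UNIV. f a) = (\<Sum>a\<in>UNIV \<times> UNIV. f a)" by (simp add: UNIV_Times_UNIV)
  also have "\<dots> = (\<Sum>i\<in>UNIV. \<Sum>b\<in>UNIV. f (i, b))" by (simp add: sum.cartesian_product)
  also have "\<dots> = (\<Sum>i\<in>UNIV. f (i, True) + f (i, False))" by (simp add: UNIV_bool add.commute)
  finally show ?thesis .
qed

definition cM :: "complex^'n^'n \<Rightarrow> ('n \<times> bool) \<Rightarrow> ('n \<times> bool) \<Rightarrow> real" where
  "cM A a b = (if snd a = snd b then Re (A $ fst a $ fst b)
               else if snd a then - Im (A $ fst a $ fst b) else Im (A $ fst a $ fst b))"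

lemma cquad_Q:
  fixes A :: "complex^'n^'n"
  shows "Re (cquad A (cvec v)) = Q (cM A) v"
proof -
  have "Q (cM A) v = (\<Sum>i\<in>UNIV. \<Sum>j\<in>UNIV.
      v (i,True) * cM A (i,True) (j,True) * v (j,True) + v (i,True) * cM A (i,True) (j,False) * v (j,False)
    + (v (i,False) * cM A (i,False) (j,True) * v (j,True) + v (i,False) * cM A (i,False) (j,False) * v (j,False)))"
    unfolding Q_def sum_pair_bool by (simp add: sum.distrib)
  also have "\<dots> = (\<Sum>i\<in>UNIV. \<Sum>j\<in>UNIV. Re (cnj (cvec v i) * (A $ i $ j) * cvec v j))"
    by (intro sum.cong refl) (simp add: cM_def cvec_def algebra_simps)
  also have "\<dots> = Re (cquad A (cvec v))" by (simp add: cquad_def)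
  finally show ?thesis by simp
qed

lemma complex_case:
  fixes A :: "nat \<Rightarrow> complex^'n^'n"
  assumes k: "0 < k" and m: "0 < m" and mkd: "m * k \<le> d"
    and psd: "\<forall>i\<in>{1..d}. psd_complex (A i)"
  shows "SRel_complex d (m * k) A \<le> SRel_complex d k A"
proof -
  have N: "(\<lambda>v::'n \<times> bool \<Rightarrow> real. \<Sum>i\<in>UNIV. (cmod (cvec v i))^2) = (\<lambda>v. \<Sum>a\<in>UNIV. (v a)^2)"
    by (rule ext) (simp add: sum_pair_bool cmod_power2 cvec_def)
  show ?thesis
    unfolding SRel_complex_def N
  proof (rule SRel_gen_mono[OF k m mkd])
    show "\<forall>i\<in>{1..d}. \<exists>M. (\<forall>x. Re (cquad (A i) (cvec x)) = Q M x) \<and> (\<forall>x. 0 \<le> Re (cquad (A i) (cvec x)))"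
    proof
      fix i assume i: "i \<in> {1..d}"
      show "\<exists>M. (\<forall>x. Re (cquad (A i) (cvec x)) = Q M x) \<and> (\<forall>x. 0 \<le> Re (cquad (A i) (cvec x)))"
        using psd i cquad_Q unfolding psd_complex_def by blast
    qed
  qed
qed

theorem mainTheorem13:
  fixes d k m :: nat
  assumes "0 < k" and "0 < m" and "m * k \<le> d"
  shows "(\<forall>A :: nat \<Rightarrow> real^'n^'n. (\<forall>i\<in>{1..d}. psd_real (A i)) \<longrightarrow>
            SRel_real d (m * k) A \<le> SRel_real d k A)
       \<and> (\<forall>A :: nat \<Rightarrow> complex^'n^'n. (\<forall>i\<in>{1..d}. psd_complex (A i)) \<longrightarrow>
            SRel_complex d (m * k) A \<le> SRel_complex d k A)"
  using real_case[OF assms] complex_case[OF assms] by blast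

end
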